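(* Let $F$ be any non-trivial finite group with trivial center (e.g. a non-abelian finite simple group). Then there exist an infinite compact Hausdorff space $X$ and two minimal free continuous actions $\widetilde{\alpha}$ and $\widetilde{\alpha}'$ of $\mathbb{Z}\times F$ on $X$ such that $\widetilde{\alpha}$ and $\widetilde{\alpha}'$ are continuously orbit equivalent but not conjugate.
   Context: Continuous orbit equivalence: two continuous actions $G\curvearrowright X$ and $K\curvearrowright Y$ on compact Hausdorff spaces are continuously orbit equivalent if there is a homeomorphism $\phi:X\to Y$ with inverse $\psi$ and continuous maps $a:G\times X\to K$, $b:K\times Y\to G$ such that $\phi(gx)=a(g,x)\phi(x)$ and $\psi(hy)=b(h,y)\psi(y)$ for all $g\in G$, $h\in K$, $x\in X$, $y\in Y$. Two actions $\alpha,\beta$ of the same group $G$ on $X$ are conjugate if there are a homeomorphism $\phi:X\to X$ and a group automorphism $\tau$ of $G$ with $\phi(\alpha_g x)=\beta_{\tau(g)}(\phi(x))$ for all $g\in G$, $x\in X$ (equivalently, the maps $a,b$ above can be taken to be group isomorphisms). *)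

theory Defs
  imports "HOL-Analysis.Analysis" "HOL-Algebra.Elementary_Groups"
begin

definition group_center :: "('g, 'm) monoid_scheme \<Rightarrow> 'g set" where
  "group_center G = {z \<in> carrier G. \<forall>g \<in> carrier G. z \<otimes>\<^bsub>G\<^esub> g = g \<otimes>\<^bsub>G\<^esub> z}"

definition continuous_action ::
  "('g, 'm) monoid_scheme \<Rightarrow> 'x topology \<Rightarrow> ('g \<Rightarrow> 'x \<Rightarrow> 'x) \<Rightarrow> bool" where
  "continuous_action G T \<alpha> \<longleftrightarrow> group G \<and>
     (\<forall>g \<in> carrier G. continuous_map T T (\<alpha> g)) \<and>
     (\<forall>x \<in> topspace T. \<alpha> \<one>\<^bsub>G\<^esub> x = x) \<and>
     (\<forall>g \<in> carrier G. \<forall>h \<in> carrier G. \<forall>x \<in> topspace T.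
        \<alpha> (g \<otimes>\<^bsub>G\<^esub> h) x = \<alpha> g (\<alpha> h x))"

definition free_action ::
  "('g, 'm) monoid_scheme \<Rightarrow> 'x topology \<Rightarrow> ('g \<Rightarrow> 'x \<Rightarrow> 'x) \<Rightarrow> bool" where
  "free_action G T \<alpha> \<longleftrightarrow>
     (\<forall>g \<in> carrier G. \<forall>x \<in> topspace T. \<alpha> g x = x \<longrightarrow> g = \<one>\<^bsub>G\<^esub>)"

definition minimal_action ::
  "('g, 'm) monoid_scheme \<Rightarrow> 'x topology \<Rightarrow> ('g \<Rightarrow> 'x \<Rightarrow> 'x) \<Rightarrow> bool" where
  "minimal_action G T \<alpha> \<longleftrightarrow>
     (\<forall>x \<in> topspace T. T closure_of ((\<lambda>g. \<alpha> g x) ` carrier G) = topspace T)"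

text \<open>Continuous orbit equivalence. Since the groups are discrete, continuity of
  the cocycle a : G \<times> X \<rightarrow> K means continuity of each a g : X \<rightarrow> K (discrete).\<close>
definition cont_orbit_equiv ::
  "('g, 'm) monoid_scheme \<Rightarrow> 'x topology \<Rightarrow> ('g \<Rightarrow> 'x \<Rightarrow> 'x) \<Rightarrow>
   ('k, 'n) monoid_scheme \<Rightarrow> 'y topology \<Rightarrow> ('k \<Rightarrow> 'y \<Rightarrow> 'y) \<Rightarrow> bool" where
  "cont_orbit_equiv G T \<alpha> K S \<beta> \<longleftrightarrow>
     (\<exists>\<phi> \<psi> a b. homeomorphic_maps T S \<phi> \<psi> \<and>
        (\<forall>g \<in> carrier G. continuous_map T (discrete_topology (carrier K)) (a g)) \<and>
        (\<forall>h \<in> carrier K. continuous_map S (discrete_topology (carrier G)) (b h)) \<and>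
        (\<forall>g \<in> carrier G. \<forall>x \<in> topspace T. \<phi> (\<alpha> g x) = \<beta> (a g x) (\<phi> x)) \<and>
        (\<forall>h \<in> carrier K. \<forall>y \<in> topspace S. \<psi> (\<beta> h y) = \<alpha> (b h y) (\<psi> y)))"

definition conjugate_actions ::
  "('g, 'm) monoid_scheme \<Rightarrow> 'x topology \<Rightarrow> ('g \<Rightarrow> 'x \<Rightarrow> 'x) \<Rightarrow> ('g \<Rightarrow> 'x \<Rightarrow> 'x) \<Rightarrow> bool" where
  "conjugate_actions G T \<alpha> \<beta> \<longleftrightarrow>
     (\<exists>\<phi> \<tau>. homeomorphic_map T T \<phi> \<and> \<tau> \<in> iso G G \<and>
        (\<forall>g \<in> carrier G. \<forall>x \<in> topspace T. \<phi> (\<alpha> g x) = \<beta> (\<tau> g) (\<phi> x)))"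

end

theory Submission
  imports Defs "HOL-Algebra.Multiplicative_Group" "HOL-Library.Nat_Bijection"
begin

section \<open>Transport along homeomorphisms\<close>

lemma cm_mem: "continuous_map X Y f \<Longrightarrow> x \<in> topspace X \<Longrightarrow> f x \<in> topspace Y"
  using continuous_map_image_subset_topspace by blast

lemma transport_action:
  assumes h: "homeomorphic_maps S T e d" and A: "continuous_action G S \<beta>"
  shows "continuous_action G T (\<lambda>g x. e (\<beta> g (d x)))"
proof -
  have ce: "continuous_map S T e" and cd: "continuous_map T S d"
    and de: "\<And>x. x \<in> topspace S \<Longrightarrow> d (e x) = x"
    and ed: "\<And>y. y \<in> topspace T \<Longrightarrow> e (d y) = y"
    using h by (auto simp: homeomorphic_maps_def)
  have dT: "\<And>y. y \<in> topspace T \<Longrightarrow> d y \<in> topspace S"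
    using cd by (meson cm_mem)
  have cb: "\<And>g. g \<in> carrier G \<Longrightarrow> continuous_map S S (\<beta> g)" using A by (simp add: continuous_action_def)
  have bS: "\<And>g x. g \<in> carrier G \<Longrightarrow> x \<in> topspace S \<Longrightarrow> \<beta> g x \<in> topspace S"
    using cb by (meson cm_mem)
  show ?thesis
    unfolding continuous_action_def
  proof (intro conjI ballI)
    show "group G" using A by (simp add: continuous_action_def)
    fix g assume g: "g \<in> carrier G"
    have "continuous_map T T (e \<circ> (\<beta> g \<circ> d))"
      by (intro continuous_map_compose[OF continuous_map_compose[OF cd cb[OF g]] ce])
    then show "continuous_map T T (\<lambda>x. e (\<beta> g (d x)))" by (simp add: o_def)
  next
    fix x assume "x \<in> topspace T"
    then have "\<beta> \<one>\<^bsub>G\<^esub> (d x) = d x" using A dT unfolding continuous_action_def by blast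
    then show "e (\<beta> \<one>\<^bsub>G\<^esub> (d x)) = x" using ed \<open>x \<in> topspace T\<close> by simp
  next
    fix g h x assume g: "g \<in> carrier G" and hh: "h \<in> carrier G" and x: "x \<in> topspace T"
    show "e (\<beta> (g \<otimes>\<^bsub>G\<^esub> h) (d x)) = e (\<beta> g (d (e (\<beta> h (d x)))))"
    proof -
      have "\<beta> (g \<otimes>\<^bsub>G\<^esub> h) (d x) = \<beta> g (\<beta> h (d x))"
        using A g hh dT[OF x] unfolding continuous_action_def by blast
      moreover have "d (e (\<beta> h (d x))) = \<beta> h (d x)" using de bS[OF hh dT[OF x]] by blast
      ultimately show ?thesis by simp
    qed
  qed
qed

lemma transport_free:
  assumes h: "homeomorphic_maps S T e d" and A: "continuous_action G S \<beta>" and F: "free_action G S \<beta>"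
  shows "free_action G T (\<lambda>g x. e (\<beta> g (d x)))"
proof -
  have cd: "continuous_map T S d"
    and de: "\<And>x. x \<in> topspace S \<Longrightarrow> d (e x) = x"
    and ed: "\<And>y. y \<in> topspace T \<Longrightarrow> e (d y) = y"
    using h by (auto simp: homeomorphic_maps_def)
  have dT: "\<And>y. y \<in> topspace T \<Longrightarrow> d y \<in> topspace S"
    using cd by (meson cm_mem)
  have bS: "\<And>g x. g \<in> carrier G \<Longrightarrow> x \<in> topspace S \<Longrightarrow> \<beta> g x \<in> topspace S"
    using A unfolding continuous_action_def by (meson cm_mem)
  show ?thesis unfolding free_action_def
  proof (intro ballI impI)
    fix g x assume g: "g \<in> carrier G" and x: "x \<in> topspace T" and eq: "e (\<beta> g (d x)) = x"
    have "\<beta> g (d x) = d x" using arg_cong[OF eq, of d] de bS[OF g dT[OF x]] by simp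
    then show "g = \<one>\<^bsub>G\<^esub>" using F g dT[OF x] unfolding free_action_def by blast
  qed
qed

lemma transport_minimal:
  assumes h: "homeomorphic_maps S T e d" and A: "continuous_action G S \<beta>" and M: "minimal_action G S \<beta>"
  shows "minimal_action G T (\<lambda>g x. e (\<beta> g (d x)))"
proof -
  have cd: "continuous_map T S d"
    and ed: "\<And>y. y \<in> topspace T \<Longrightarrow> e (d y) = y"
    using h by (auto simp: homeomorphic_maps_def)
  have dT: "\<And>y. y \<in> topspace T \<Longrightarrow> d y \<in> topspace S"
    using cd by (meson cm_mem)
  have hm: "homeomorphic_map S T e" using h homeomorphic_map_maps by blast
  have img: "e ` topspace S = topspace T"
    using hm homeomorphic_imp_surjective_map by blast
  show ?thesis unfolding minimal_action_def
  proof (intro ballI)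
    fix x assume x: "x \<in> topspace T"
    have cl: "S closure_of ((\<lambda>g. \<beta> g (d x)) ` carrier G) = topspace S"
      using M dT[OF x] by (simp add: minimal_action_def)
    have bS: "\<And>g x. g \<in> carrier G \<Longrightarrow> x \<in> topspace S \<Longrightarrow> \<beta> g x \<in> topspace S"
      using A unfolding continuous_action_def by (meson cm_mem)
    have sub: "(\<lambda>g. \<beta> g (d x)) ` carrier G \<subseteq> topspace S"
      using bS dT[OF x] by blast
    have "T closure_of ((\<lambda>g. e (\<beta> g (d x))) ` carrier G) = T closure_of (e ` ((\<lambda>g. \<beta> g (d x)) ` carrier G))"
      by (simp add: image_image)
    also have "\<dots> = e ` (S closure_of ((\<lambda>g. \<beta> g (d x)) ` carrier G))"
      by (rule homeomorphic_map_closure_of[OF hm sub])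
    also have "\<dots> = topspace T" using cl img by simp
    finally show "T closure_of ((\<lambda>g. e (\<beta> g (d x))) ` carrier G) = topspace T" .
  qed
qed

lemma transport_coe:
  assumes h: "homeomorphic_maps S T e d" and A: "continuous_action G S \<beta>"
    and C: "cont_orbit_equiv G S \<beta> K S \<beta>'"
    and A': "continuous_action K S \<beta>'"
  shows "cont_orbit_equiv G T (\<lambda>g x. e (\<beta> g (d x))) K T (\<lambda>g x. e (\<beta>' g (d x)))"
proof -
  have ce: "continuous_map S T e" and cd: "continuous_map T S d"
    and de: "\<And>x. x \<in> topspace S \<Longrightarrow> d (e x) = x"
    and ed: "\<And>y. y \<in> topspace T \<Longrightarrow> e (d y) = y"
    using h by (auto simp: homeomorphic_maps_def)
  have dT: "\<And>y. y \<in> topspace T \<Longrightarrow> d y \<in> topspace S"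
    using cd by (meson cm_mem)
  have bS: "\<And>g x. g \<in> carrier G \<Longrightarrow> x \<in> topspace S \<Longrightarrow> \<beta> g x \<in> topspace S"
    using A unfolding continuous_action_def by (meson cm_mem)
  have bS': "\<And>g x. g \<in> carrier K \<Longrightarrow> x \<in> topspace S \<Longrightarrow> \<beta>' g x \<in> topspace S"
    using A' unfolding continuous_action_def by (meson cm_mem)
  obtain \<phi> \<psi> a b where hp: "homeomorphic_maps S S \<phi> \<psi>"
    and ca: "\<forall>g \<in> carrier G. continuous_map S (discrete_topology (carrier K)) (a g)"
    and cb: "\<forall>h \<in> carrier K. continuous_map S (discrete_topology (carrier G)) (b h)"
    and ea: "\<forall>g \<in> carrier G. \<forall>x \<in> topspace S. \<phi> (\<beta> g x) = \<beta>' (a g x) (\<phi> x)"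
    and eb: "\<forall>h \<in> carrier K. \<forall>y \<in> topspace S. \<psi> (\<beta>' h y) = \<beta> (b h y) (\<psi> y)"
    using C unfolding cont_orbit_equiv_def by blast
  have cphi: "continuous_map S S \<phi>" and cpsi: "continuous_map S S \<psi>"
    using hp by (auto simp: homeomorphic_maps_def)
  have hTS: "homeomorphic_maps T S d e" using h unfolding homeomorphic_maps_def by auto
  have h1: "homeomorphic_maps T S (\<phi> \<circ> d) (e \<circ> \<psi>)"
    using homeomorphic_maps_compose[of T S d e S \<phi> \<psi>] hTS hp by blast
  have h2: "homeomorphic_maps T T (e \<circ> (\<phi> \<circ> d)) ((e \<circ> \<psi>) \<circ> d)"
    using homeomorphic_maps_compose[of T S "\<phi> \<circ> d" "e \<circ> \<psi>" T e d] h1 h by blast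
  have f2: "\<forall>g \<in> carrier G. continuous_map T (discrete_topology (carrier K)) (a g \<circ> d)"
    using continuous_map_compose[OF cd] ca by blast
  have f3: "\<forall>k \<in> carrier K. continuous_map T (discrete_topology (carrier G)) (b k \<circ> d)"
    using continuous_map_compose[OF cd] cb by blast
  have f4: "\<forall>g \<in> carrier G. \<forall>x \<in> topspace T. (e \<circ> (\<phi> \<circ> d)) (e (\<beta> g (d x))) = e (\<beta>' ((a g \<circ> d) x) (d ((e \<circ> (\<phi> \<circ> d)) x)))"
  proof (intro ballI)
    fix g x assume g: "g \<in> carrier G" and x: "x \<in> topspace T"
    have 1: "d (e (\<beta> g (d x))) = \<beta> g (d x)" using de bS[OF g dT[OF x]] by blast
    have 2: "d (e (\<phi> (d x))) = \<phi> (d x)" using de cm_mem[OF cphi dT[OF x]] by blast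
    have 3: "\<phi> (\<beta> g (d x)) = \<beta>' (a g (d x)) (\<phi> (d x))" using ea g dT[OF x] by blast
    show "(e \<circ> (\<phi> \<circ> d)) (e (\<beta> g (d x))) = e (\<beta>' ((a g \<circ> d) x) (d ((e \<circ> (\<phi> \<circ> d)) x)))"
      unfolding o_def 1 2 3 by simp
  qed
  have f5: "\<forall>k \<in> carrier K. \<forall>y \<in> topspace T. (e \<circ> \<psi> \<circ> d) (e (\<beta>' k (d y))) = e (\<beta> ((b k \<circ> d) y) (d ((e \<circ> \<psi> \<circ> d) y)))"
  proof (intro ballI)
    fix k y assume k: "k \<in> carrier K" and y: "y \<in> topspace T"
    have 1: "d (e (\<beta>' k (d y))) = \<beta>' k (d y)" using de bS'[OF k dT[OF y]] by blast
    have 2: "d (e (\<psi> (d y))) = \<psi> (d y)" using de cm_mem[OF cpsi dT[OF y]] by blast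
    have 3: "\<psi> (\<beta>' k (d y)) = \<beta> (b k (d y)) (\<psi> (d y))" using eb k dT[OF y] by blast
    show "(e \<circ> \<psi> \<circ> d) (e (\<beta>' k (d y))) = e (\<beta> ((b k \<circ> d) y) (d ((e \<circ> \<psi> \<circ> d) y)))"
      unfolding o_def 1 2 3 by simp
  qed
  show ?thesis
    unfolding cont_orbit_equiv_def
    apply (rule exI[where x="e \<circ> (\<phi> \<circ> d)"])
    apply (rule exI[where x="(e \<circ> \<psi>) \<circ> d"])
    apply (rule exI[where x="\<lambda>g. a g \<circ> d"])
    apply (rule exI[where x="\<lambda>k. b k \<circ> d"])
    using h2 f2 f3 f4 f5 by (intro conjI) simp_all
qed

lemma transport_conj:
  assumes h: "homeomorphic_maps S T e d"
    and A: "continuous_action G S \<beta>" and A': "continuous_action G S \<beta>'"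
    and C: "conjugate_actions G T (\<lambda>g x. e (\<beta> g (d x))) (\<lambda>g x. e (\<beta>' g (d x)))"
  shows "conjugate_actions G S \<beta> \<beta>'"
proof -
  have ce: "continuous_map S T e" and cd: "continuous_map T S d"
    and de: "\<And>x. x \<in> topspace S \<Longrightarrow> d (e x) = x"
    and ed: "\<And>y. y \<in> topspace T \<Longrightarrow> e (d y) = y"
    using h by (auto simp: homeomorphic_maps_def)
  have dT: "\<And>y. y \<in> topspace T \<Longrightarrow> d y \<in> topspace S"
    using cd by (meson cm_mem)
  have eS: "\<And>y. y \<in> topspace S \<Longrightarrow> e y \<in> topspace T"
    using ce by (meson cm_mem)
  have bS': "\<And>g x. g \<in> carrier G \<Longrightarrow> x \<in> topspace S \<Longrightarrow> \<beta>' g x \<in> topspace S"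
    using A' unfolding continuous_action_def by (meson cm_mem)
  obtain \<phi> \<tau> where hp: "homeomorphic_map T T \<phi>" and tau: "\<tau> \<in> iso G G"
    and eq: "\<forall>g \<in> carrier G. \<forall>x \<in> topspace T.
        \<phi> (e (\<beta> g (d x))) = e (\<beta>' (\<tau> g) (d (\<phi> x)))"
    using C unfolding conjugate_actions_def by blast
  have tauc: "\<And>g. g \<in> carrier G \<Longrightarrow> \<tau> g \<in> carrier G"
    using tau by (auto simp: iso_def hom_def)
  have cphi: "continuous_map T T \<phi>" using hp homeomorphic_imp_continuous_map by blast
  have hme: "homeomorphic_map S T e" using h homeomorphic_map_maps by blast
  have "homeomorphic_maps T S d e" using h unfolding homeomorphic_maps_def by auto
  then have hmd: "homeomorphic_map T S d" using homeomorphic_map_maps by blast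
  have "homeomorphic_map S S (d \<circ> (\<phi> \<circ> e))"
    by (intro homeomorphic_map_compose[OF homeomorphic_map_compose[OF hme hp] hmd])
  moreover have "\<forall>g \<in> carrier G. \<forall>x \<in> topspace S.
        (d \<circ> (\<phi> \<circ> e)) (\<beta> g x) = \<beta>' (\<tau> g) ((d \<circ> (\<phi> \<circ> e)) x)"
  proof (intro ballI)
    fix g x assume g: "g \<in> carrier G" and x: "x \<in> topspace S"
    have "\<phi> (e (\<beta> g x)) = e (\<beta>' (\<tau> g) (d (\<phi> (e x))))"
      using eq g eS[OF x] de[OF x] by force
    then have "d (\<phi> (e (\<beta> g x))) = d (e (\<beta>' (\<tau> g) (d (\<phi> (e x)))))" by simp
    also have "\<dots> = \<beta>' (\<tau> g) (d (\<phi> (e x)))"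
      using de bS' tauc[OF g] dT cm_mem[OF cphi eS[OF x]] by blast
    finally show "(d \<circ> (\<phi> \<circ> e)) (\<beta> g x) = \<beta>' (\<tau> g) ((d \<circ> (\<phi> \<circ> e)) x)" by simp
  qed
  ultimately show ?thesis unfolding conjugate_actions_def using tau by blast
qed

lemma homeo_image:
  fixes e :: "'a \<Rightarrow> 'b"
  assumes inj: "inj_on e (topspace S)"
  shows "\<exists>(T :: 'b topology) d. homeomorphic_maps S T e d \<and> topspace T = e ` topspace S"
proof -
  define A where "A = e ` topspace S"
  define d where "d = inv_into (topspace S) e"
  define T where "T = pullback_topology A d S"
  have de: "\<And>x. x \<in> topspace S \<Longrightarrow> d (e x) = x" using inj by (simp add: d_def inv_into_f_f)
  have ed: "\<And>y. y \<in> A \<Longrightarrow> e (d y) = y" by (simp add: A_def d_def f_inv_into_f)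
  have tT: "topspace T = A"
    unfolding T_def topspace_pullback_topology using de by (auto simp: A_def)
  have c1: "continuous_map S T e"
    unfolding T_def
  proof (rule continuous_map_pullback')
    show "continuous_map S S (d \<circ> e)"
      by (rule continuous_map_eq[OF continuous_map_id]) (simp add: de)
    show "topspace S \<subseteq> e -` A" by (auto simp: A_def)
  qed
  have c2: "continuous_map T S d"
    using continuous_map_pullback[OF continuous_map_id, of A d S] by (simp add: T_def)
  have "homeomorphic_maps S T e d"
    unfolding homeomorphic_maps_def using c1 c2 de ed tT by auto
  then show ?thesis using tT A_def by blast
qed

lemma encode_exists:
  assumes "finite (B :: 'f set)"
  shows "\<exists>e :: (nat \<Rightarrow> int) \<times> 'f \<Rightarrow> (nat \<Rightarrow> bool). inj_on e (UNIV \<times> B)"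
proof -
  obtain \<iota> :: "'f \<Rightarrow> nat" and n where io: "\<iota> ` B = {i. i < n}" "inj_on \<iota> B"
    using finite_imp_inj_to_nat_seg[OF assms] by blast
  define e :: "(nat \<Rightarrow> int) \<times> 'f \<Rightarrow> (nat \<Rightarrow> bool)" where
    "e = (\<lambda>(y, k) i. case prod_decode i of (a, b) \<Rightarrow>
            if a = 0 then b = \<iota> k else y (a - 1) = int_decode b)"
  have "inj_on e (UNIV \<times> B)"
  proof (rule inj_onI)
    fix p p' assume p: "p \<in> UNIV \<times> B" and p': "p' \<in> UNIV \<times> B" and eq: "e p = e p'"
    obtain y k where pk: "p = (y, k)" by (cases p)
    obtain y' k' where pk': "p' = (y', k')" by (cases p')
    have "e p (prod_encode (0, \<iota> k)) = e p' (prod_encode (0, \<iota> k))" using eq by simp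
    then have "\<iota> k = \<iota> k'" by (simp add: e_def pk pk' prod_encode_inverse)
    then have kk: "k = k'" using io(2) p p' pk pk' by (auto dest: inj_onD)
    have "y j = y' j" for j
    proof -
      have "e p (prod_encode (Suc j, int_encode (y j))) = e p' (prod_encode (Suc j, int_encode (y j)))"
        using eq by simp
      then show ?thesis by (simp add: e_def pk pk' prod_encode_inverse int_encode_inverse)
    qed
    then show "p = p'" using kk pk pk' by auto
  qed
  then show ?thesis by blast
qed

locale constr =
  fixes F :: "('f, 'm) monoid_scheme" and c :: 'f and q :: nat
  assumes grp: "group F" and fin: "finite (carrier F)" and cF: "c \<in> carrier F"
    and c1: "c \<noteq> \<one>\<^bsub>F\<^esub>" and ctr: "group_center F = {\<one>\<^bsub>F\<^esub>}" and q2: "2 \<le> q"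
    and cq: "\<And>K. c [^]\<^bsub>F\<^esub> (q ^ K) = c"
begin

interpretation F: group F by (rule grp)

abbreviation "G \<equiv> integer_group \<times>\<times> F"

lemma GG: "group G" by (intro DirProd_group group_integer_group grp)

interpretation Gg: group G by (rule GG)

definition Ysp :: "(nat \<Rightarrow> int) set" where
  "Ysp = {y. \<forall>k. y k = y (Suc k) mod (int q) ^ k}"

definition PY :: "(nat \<Rightarrow> int) topology" where
  "PY = product_topology (\<lambda>k. discrete_topology {0..<(int q) ^ k}) UNIV"

definition YT where "YT = subtopology PY Ysp"

definition XS where "XS = prod_topology YT (discrete_topology (carrier F))"

definition sh :: "int \<Rightarrow> (nat \<Rightarrow> int) \<Rightarrow> (nat \<Rightarrow> int)" where
  "sh n y = (\<lambda>j. (y j + n) mod (int q) ^ j)"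

definition bt :: "int \<times> 'f \<Rightarrow> (nat \<Rightarrow> int) \<times> 'f \<Rightarrow> (nat \<Rightarrow> int) \<times> 'f" where
  "bt g x = (sh (fst g) (fst x), snd g \<otimes>\<^bsub>F\<^esub> snd x)"

definition bt' :: "int \<times> 'f \<Rightarrow> (nat \<Rightarrow> int) \<times> 'f \<Rightarrow> (nat \<Rightarrow> int) \<times> 'f" where
  "bt' g x = (sh (fst g) (fst x), snd g \<otimes>\<^bsub>F\<^esub> snd x \<otimes>\<^bsub>F\<^esub> c [^]\<^bsub>F\<^esub> fst g)"

lemma qpos: "0 < (int q) ^ k" using q2 by simp

lemma cancel_l [simp]: "a \<in> carrier F \<Longrightarrow> b \<in> carrier F \<Longrightarrow> inv\<^bsub>F\<^esub> a \<otimes>\<^bsub>F\<^esub> (a \<otimes>\<^bsub>F\<^esub> b) = b"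
  by (simp add: F.m_assoc[symmetric])

lemma cancel_r [simp]: "a \<in> carrier F \<Longrightarrow> b \<in> carrier F \<Longrightarrow> a \<otimes>\<^bsub>F\<^esub> (inv\<^bsub>F\<^esub> a \<otimes>\<^bsub>F\<^esub> b) = b"
  by (simp add: F.m_assoc[symmetric])

lemma Ysp_eq: "y \<in> Ysp \<Longrightarrow> y k = y (Suc k) mod (int q) ^ k"
  unfolding Ysp_def by blast

lemma Ysp_mod: "y \<in> Ysp \<Longrightarrow> y k mod (int q) ^ k = y k"
proof -
  assume "y \<in> Ysp"
  then have "y k = y (Suc k) mod (int q) ^ k" by (rule Ysp_eq)
  then show ?thesis by simp
qed

lemma Ysp_range: "y \<in> Ysp \<Longrightarrow> y k \<in> {0..<(int q) ^ k}"
proof -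
  assume "y \<in> Ysp"
  then have "y k = y (Suc k) mod (int q) ^ k" by (rule Ysp_eq)
  then show ?thesis using qpos[of k] by (simp add: pos_mod_sign pos_mod_bound)
qed

lemma pw_dvd: "i \<le> K \<Longrightarrow> (int q) ^ i dvd (int q) ^ K"
  by (rule le_imp_power_dvd)

lemma Ysp_le: "y \<in> Ysp \<Longrightarrow> i \<le> K \<Longrightarrow> y i = y K mod (int q) ^ i"
proof (induction K)
  case 0
  then show ?case using Ysp_mod[OF 0(1), of 0] by simp
next
  case (Suc K)
  show ?case
  proof (cases "i = Suc K")
    case True
    then show ?thesis using Ysp_mod[OF Suc(2), of i] by (simp del: power_Suc)
  next
    case False
    then have iK: "i \<le> K" using Suc(3) by simp
    have "y i = y K mod (int q) ^ i" using Suc iK by simp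
    also have "y K = y (Suc K) mod (int q) ^ K" using Suc(2) by (rule Ysp_eq)
    finally show ?thesis using mod_mod_cancel[OF pw_dvd[OF iK]] by simp
  qed
qed

lemma topspace_PY: "topspace PY = {y. \<forall>k. y k \<in> {0..<(int q) ^ k}}"
  by (auto simp: PY_def PiE_UNIV_domain)

lemma Ysp_sub: "Ysp \<subseteq> topspace PY"
  using Ysp_range by (auto simp: topspace_PY)

lemma topspace_YT: "topspace YT = Ysp"
  using Ysp_sub by (auto simp: YT_def)

lemma topspace_XS: "topspace XS = Ysp \<times> carrier F"
  by (simp add: XS_def topspace_YT)

lemma sh_Ysp: "y \<in> Ysp \<Longrightarrow> sh n y \<in> Ysp"
proof -
  assume y: "y \<in> Ysp"
  have "(y k + n) mod (int q) ^ k = ((y (Suc k) + n) mod (int q) ^ Suc k) mod (int q) ^ k" for k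
  proof -
    have d: "(int q) ^ k dvd (int q) ^ Suc k" by (rule pw_dvd) simp
    have "y k = y (Suc k) mod (int q) ^ k" using y by (rule Ysp_eq)
    then have "(y k + n) mod (int q) ^ k = (y (Suc k) + n) mod (int q) ^ k"
      by (simp add: mod_add_left_eq)
    also have "\<dots> = ((y (Suc k) + n) mod (int q) ^ Suc k) mod (int q) ^ k"
      using mod_mod_cancel[OF d] by simp
    finally show ?thesis .
  qed
  then show ?thesis unfolding Ysp_def sh_def mem_Collect_eq by blast
qed

lemma sh_0: "y \<in> Ysp \<Longrightarrow> sh 0 y = y"
  by (auto simp: sh_def Ysp_mod)

lemma sh_add: "sh n (sh m y) = sh (n + m) y"
  by (auto simp: sh_def mod_add_left_eq mod_add_right_eq ac_simps)

lemma sh_fix: assumes y: "y \<in> Ysp" and e: "sh n y = y" shows "n = 0"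
proof -
  have dv: "(int q) ^ j dvd n" for j
  proof -
    have "(y j + n) mod (int q) ^ j = y j mod (int q) ^ j"
      using fun_cong[OF e, of j] Ysp_mod[OF y, of j] by (simp add: sh_def)
    then have "(int q) ^ j dvd (y j + n) - y j" by (simp only: mod_eq_dvd_iff)
    then show ?thesis by simp
  qed
  define j where "j = nat \<bar>n\<bar>"
  have "j < 2 ^ j" by (rule less_exp)
  also have "(2::nat) ^ j \<le> q ^ j" using q2 by (simp add: power_mono)
  finally have "int j < int (q ^ j)" by simp
  then have lt: "\<bar>n\<bar> < (int q) ^ j" by (simp add: j_def)
  show "n = 0"
  proof (rule ccontr)
    assume "n \<noteq> 0"
    then have "\<bar>(int q) ^ j\<bar> \<le> \<bar>n\<bar>" using dvd_imp_le_int dv by blast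
    then show False using lt by simp
  qed
qed

lemma sh_inj: assumes y: "y \<in> Ysp" and e: "sh n y = sh m y" shows "n = m"
proof -
  have "sh (-m) (sh n y) = sh (-m) (sh m y)" using e by simp
  then have "sh (n - m) y = y" using sh_0[OF y] by (simp add: sh_add)
  then have "n - m = 0" by (rule sh_fix[OF y])
  then show ?thesis by simp
qed

lemma sh_agree: assumes y: "y \<in> Ysp" and iK: "i \<le> K" shows "sh ((int q) ^ K) y i = y i"
proof -
  obtain t where t: "(int q) ^ K = (int q) ^ i * t" using pw_dvd[OF iK] by (auto elim: dvdE)
  have "sh ((int q) ^ K) y i = (y i + (int q) ^ i * t) mod (int q) ^ i" by (simp add: sh_def t)
  also have "\<dots> = y i mod (int q) ^ i" by simp
  also have "\<dots> = y i" using Ysp_mod[OF y] by simp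
  finally show ?thesis .
qed

lemma sh_hit: assumes y: "y \<in> Ysp" and z: "z \<in> Ysp" and iK: "i \<le> K"
  shows "sh (z K - y K) y i = z i"
proof -
  have "sh (z K - y K) y i = (y K mod (int q) ^ i + (z K - y K)) mod (int q) ^ i"
    using Ysp_le[OF y iK] by (simp add: sh_def)
  also have "\<dots> = (y K + (z K - y K)) mod (int q) ^ i" by (simp add: mod_add_left_eq)
  also have "\<dots> = z K mod (int q) ^ i" by simp
  also have "\<dots> = z i" using Ysp_le[OF z iK] by simp
  finally show ?thesis .
qed

lemma cont_coord: "continuous_map PY (discrete_topology {0..<(int q) ^ k}) (\<lambda>y. y k)"
  unfolding PY_def using continuous_map_product_projection[of k UNIV "\<lambda>k. discrete_topology {0..<(int q) ^ k}"]
  by simp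

lemma cont_sh: "continuous_map YT YT (sh n)"
proof -
  have "continuous_map YT PY (sh n)"
    unfolding PY_def continuous_map_componentwise_UNIV
  proof
    fix k
    have c0: "continuous_map YT (discrete_topology {0..<(int q) ^ k}) (\<lambda>y. y k)"
      unfolding YT_def by (rule continuous_map_from_subtopology[OF cont_coord])
    have c1: "continuous_map (discrete_topology {0..<(int q) ^ k}) (discrete_topology {0..<(int q) ^ k})
                (\<lambda>v. (v + n) mod (int q) ^ k)"
      using qpos[of k] by (simp add: Pi_iff pos_mod_sign pos_mod_bound)
    have "continuous_map YT (discrete_topology {0..<(int q) ^ k}) ((\<lambda>v. (v + n) mod (int q) ^ k) \<circ> (\<lambda>y. y k))"
      by (rule continuous_map_compose[OF c0 c1])
    then show "continuous_map YT (discrete_topology {0..<(int q) ^ k}) (\<lambda>x. sh n x k)"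
      by (simp add: o_def sh_def)
  qed
  moreover have "sh n \<in> topspace YT \<rightarrow> Ysp" using sh_Ysp by (auto simp: topspace_YT)
  ultimately have "continuous_map YT (subtopology PY Ysp) (sh n)" by (simp add: continuous_map_in_subtopology)
  then show ?thesis by (simp only: YT_def[symmetric])
qed

lemma cont_snd: "h \<in> carrier F \<rightarrow> topspace Z \<Longrightarrow> continuous_map XS Z (\<lambda>x. h (snd x))"
proof -
  assume "h \<in> carrier F \<rightarrow> topspace Z"
  then have "continuous_map (discrete_topology (carrier F)) Z h" by simp
  then have "continuous_map XS Z (h \<circ> snd)"
    unfolding XS_def by (rule continuous_map_compose[OF continuous_map_snd])
  then show ?thesis by (simp add: o_def)
qed

lemma cont_gen: "h \<in> carrier F \<rightarrow> carrier F \<Longrightarrow> continuous_map XS XS (\<lambda>x. (sh n (fst x), h (snd x)))"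
proof -
  assume h: "h \<in> carrier F \<rightarrow> carrier F"
  have "continuous_map XS YT (sh n \<circ> fst)"
    unfolding XS_def by (rule continuous_map_compose[OF continuous_map_fst cont_sh])
  moreover have "continuous_map XS (discrete_topology (carrier F)) (\<lambda>x. h (snd x))"
    using h by (intro cont_snd) simp
  ultimately have "continuous_map XS (prod_topology YT (discrete_topology (carrier F))) (\<lambda>x. (sh n (fst x), h (snd x)))"
    by (simp add: continuous_map_pairwise o_def)
  then show ?thesis by (simp only: XS_def[symmetric])
qed

lemma bt_comp: "bt g x = (sh (fst g) (fst x), (\<lambda>k. snd g \<otimes>\<^bsub>F\<^esub> k) (snd x))"
  by (simp add: bt_def)

lemma act_bt: "continuous_action G XS bt"
  unfolding continuous_action_def
proof (intro conjI ballI)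
  show "group G" by (rule GG)
next
  fix g assume g: "g \<in> carrier G"
  have "continuous_map XS XS (\<lambda>x. (sh (fst g) (fst x), (\<lambda>k. snd g \<otimes>\<^bsub>F\<^esub> k) (snd x)))"
    using g by (intro cont_gen) auto
  then show "continuous_map XS XS (bt g)" by (simp add: bt_def[abs_def])
next
  fix x assume "x \<in> topspace XS"
  then show "bt \<one>\<^bsub>G\<^esub> x = x" by (auto simp: topspace_XS bt_def sh_0)
next
  fix g h x assume g: "g \<in> carrier G" and h: "h \<in> carrier G" and x: "x \<in> topspace XS"
  then show "bt (g \<otimes>\<^bsub>G\<^esub> h) x = bt g (bt h x)"
    by (auto simp: topspace_XS bt_def sh_add mult_DirProd' F.m_assoc)
qed

lemma pow_add_c: "c [^]\<^bsub>F\<^esub> (n + m :: int) = c [^]\<^bsub>F\<^esub> m \<otimes>\<^bsub>F\<^esub> c [^]\<^bsub>F\<^esub> n"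
  using F.int_pow_mult[OF cF, of m n] by (simp add: add.commute)

lemma act_bt': "continuous_action G XS bt'"
  unfolding continuous_action_def
proof (intro conjI ballI)
  show "group G" by (rule GG)
next
  fix g assume g: "g \<in> carrier G"
  have "continuous_map XS XS (\<lambda>x. (sh (fst g) (fst x), (\<lambda>k. snd g \<otimes>\<^bsub>F\<^esub> k \<otimes>\<^bsub>F\<^esub> c [^]\<^bsub>F\<^esub> fst g) (snd x)))"
    using g cF by (intro cont_gen) auto
  then show "continuous_map XS XS (bt' g)" by (simp add: bt'_def[abs_def])
next
  fix x assume "x \<in> topspace XS"
  then show "bt' \<one>\<^bsub>G\<^esub> x = x" by (auto simp: topspace_XS bt'_def sh_0)
next
  fix g h x assume g: "g \<in> carrier G" and h: "h \<in> carrier G" and x: "x \<in> topspace XS"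
  then show "bt' (g \<otimes>\<^bsub>G\<^esub> h) x = bt' g (bt' h x)"
    using cF by (auto simp: topspace_XS bt'_def sh_add mult_DirProd' F.m_assoc pow_add_c)
qed

lemma free_bt: "free_action G XS bt"
  unfolding free_action_def
proof (intro ballI impI)
  fix g x assume g: "g \<in> carrier G" and x: "x \<in> topspace XS" and e: "bt g x = x"
  obtain n f where gn: "g = (n, f)" by (cases g)
  obtain y k where xy: "x = (y, k)" by (cases x)
  have y: "y \<in> Ysp" and k: "k \<in> carrier F" and f: "f \<in> carrier F"
    using g x by (auto simp: gn xy topspace_XS)
  have "sh n y = y" and "f \<otimes>\<^bsub>F\<^esub> k = k" using e by (auto simp: bt_def gn xy)
  then have "n = 0" and "f = \<one>\<^bsub>F\<^esub>" using sh_fix[OF y] k f by auto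
  then show "g = \<one>\<^bsub>G\<^esub>" by (simp add: gn)
qed

lemma free_bt': "free_action G XS bt'"
  unfolding free_action_def
proof (intro ballI impI)
  fix g x assume g: "g \<in> carrier G" and x: "x \<in> topspace XS" and e: "bt' g x = x"
  obtain n f where gn: "g = (n, f)" by (cases g)
  obtain y k where xy: "x = (y, k)" by (cases x)
  have y: "y \<in> Ysp" and k: "k \<in> carrier F" and f: "f \<in> carrier F"
    using g x by (auto simp: gn xy topspace_XS)
  have "sh n y = y" using e by (auto simp: bt'_def gn xy)
  then have n0: "n = 0" using sh_fix[OF y] by auto
  have "f \<otimes>\<^bsub>F\<^esub> k \<otimes>\<^bsub>F\<^esub> c [^]\<^bsub>F\<^esub> n = k" using e by (auto simp: bt'_def gn xy)
  then have "f \<otimes>\<^bsub>F\<^esub> k = k" using n0 f k by simp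
  then have "f = \<one>\<^bsub>F\<^esub>" using k f by simp
  then show "g = \<one>\<^bsub>G\<^esub>" by (simp add: gn n0)
qed

lemma nbhd:
  assumes W: "openin XS W" and zj: "(z, j) \<in> W"
  shows "\<exists>K. \<forall>y\<in>Ysp. (\<forall>i\<le>K. y i = z i) \<longrightarrow> (y, j) \<in> W"
proof -
  have "\<exists>U V. openin YT U \<and> openin (discrete_topology (carrier F)) V \<and> z \<in> U \<and> j \<in> V \<and> U \<times> V \<subseteq> W"
    using W zj unfolding XS_def openin_prod_topology_alt by (elim allE impE)
  then obtain U V where U: "openin YT U" and jV: "j \<in> V"
    and zU: "z \<in> U" and UV: "U \<times> V \<subseteq> W"
    by blast
  have "\<exists>U'. openin PY U' \<and> U = U' \<inter> Ysp"
    using U unfolding YT_def openin_subtopology .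
  then obtain U' where U': "openin PY U'" and UU: "U = U' \<inter> Ysp"
    by blast
  have zU': "z \<in> U'" using zU UU by blast
  have "\<exists>Vs. finite {i \<in> UNIV. Vs i \<noteq> topspace (discrete_topology {0..<(int q) ^ i})} \<and>
                 (\<forall>i \<in> UNIV. openin (discrete_topology {0..<(int q) ^ i}) (Vs i)) \<and> z \<in> Pi\<^sub>E UNIV Vs \<and> Pi\<^sub>E UNIV Vs \<subseteq> U'"
    using U' zU' unfolding PY_def openin_product_topology_alt by (elim ballE) auto
  then obtain Vs where fin: "finite {i \<in> UNIV. Vs i \<noteq> topspace (discrete_topology {0..<(int q) ^ i})}"
    and zV: "z \<in> Pi\<^sub>E UNIV Vs" and VU: "Pi\<^sub>E UNIV Vs \<subseteq> U'"
    by blast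
  obtain K where K: "\<forall>i \<in> {i \<in> UNIV. Vs i \<noteq> topspace (discrete_topology {0..<(int q) ^ i})}. i \<le> K"
    using fin unfolding finite_nat_set_iff_bounded_le by blast
  show ?thesis
  proof (intro exI ballI impI)
    fix y assume y: "y \<in> Ysp" and agr: "\<forall>i\<le>K. y i = z i"
    have "y i \<in> Vs i" for i
    proof (cases "i \<le> K")
      case True
      then have "y i = z i" using agr by blast
      moreover have "z i \<in> Vs i" using zV by (simp add: PiE_UNIV_domain Pi_iff)
      ultimately show ?thesis by simp
    next
      case False
      then have "\<not> (Vs i \<noteq> topspace (discrete_topology {0..<(int q) ^ i}))" using K by blast
      then have "Vs i = {0..<(int q) ^ i}" by simp
      then show ?thesis using Ysp_range[OF y] by simp
    qed
    then have "y \<in> Pi\<^sub>E UNIV Vs" by (simp add: PiE_UNIV_domain)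
    then have "y \<in> U" using VU UU y by blast
    then show "(y, j) \<in> W" using UV jV by blast
  qed
qed

lemma minimal_gen:
  assumes act: "\<And>n y k j. y \<in> Ysp \<Longrightarrow> k \<in> carrier F \<Longrightarrow> j \<in> carrier F \<Longrightarrow>
      \<exists>f \<in> carrier F. \<beta> (n, f) (y, k) = (sh n y, j)"
  shows "minimal_action G XS \<beta>"
  unfolding minimal_action_def
proof (intro ballI)
  fix x assume x: "x \<in> topspace XS"
  obtain y k where xy: "x = (y, k)" by (cases x)
  have y: "y \<in> Ysp" and k: "k \<in> carrier F" using x by (auto simp: xy topspace_XS)
  show "XS closure_of ((\<lambda>g. \<beta> g x) ` carrier G) = topspace XS"
  proof (rule antisym)
    show "XS closure_of ((\<lambda>g. \<beta> g x) ` carrier G) \<subseteq> topspace XS"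
      by (rule closure_of_subset_topspace)
    show "topspace XS \<subseteq> XS closure_of ((\<lambda>g. \<beta> g x) ` carrier G)"
    proof
      fix p assume p: "p \<in> topspace XS"
      obtain z j where pz: "p = (z, j)" by (cases p)
      have z: "z \<in> Ysp" and j: "j \<in> carrier F" using p by (auto simp: pz topspace_XS)
      show "p \<in> XS closure_of ((\<lambda>g. \<beta> g x) ` carrier G)"
        unfolding in_closure_of
      proof (intro conjI allI impI)
        show "p \<in> topspace XS" by (rule p)
        fix W assume "p \<in> W \<and> openin XS W"
        then obtain K where K: "\<forall>y'\<in>Ysp. (\<forall>i\<le>K. y' i = z i) \<longrightarrow> (y', j) \<in> W"
          using nbhd pz by blast
        obtain f where f: "f \<in> carrier F" and ef: "\<beta> (z K - y K, f) (y, k) = (sh (z K - y K) y, j)"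
          using act[OF y k j] by blast
        have "(sh (z K - y K) y, j) \<in> W" using K sh_Ysp[OF y] sh_hit[OF y z] by blast
        moreover have "(sh (z K - y K) y, j) \<in> (\<lambda>g. \<beta> g x) ` carrier G"
          using ef f xy by (auto intro!: image_eqI[where x="(z K - y K, f)"])
        ultimately show "\<exists>u. u \<in> (\<lambda>g. \<beta> g x) ` carrier G \<and> u \<in> W" by blast
      qed
    qed
  qed
qed

lemma min_bt: "minimal_action G XS bt"
proof (rule minimal_gen)
  fix n y k j assume y: "y \<in> Ysp" and k: "k \<in> carrier F" and j: "j \<in> carrier F"
  show "\<exists>f \<in> carrier F. bt (n, f) (y, k) = (sh n y, j)"
    using j k by (intro bexI[where x="j \<otimes>\<^bsub>F\<^esub> inv\<^bsub>F\<^esub> k"]) (auto simp: bt_def F.m_assoc)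
qed

lemma min_bt': "minimal_action G XS bt'"
proof (rule minimal_gen)
  fix n y k j assume y: "y \<in> Ysp" and k: "k \<in> carrier F" and j: "j \<in> carrier F"
  show "\<exists>f \<in> carrier F. bt' (n, f) (y, k) = (sh n y, j)"
    using j k cF
    by (intro bexI[where x="j \<otimes>\<^bsub>F\<^esub> inv\<^bsub>F\<^esub> (c [^]\<^bsub>F\<^esub> n) \<otimes>\<^bsub>F\<^esub> inv\<^bsub>F\<^esub> k"])
       (auto simp: bt'_def F.m_assoc)
qed

end

context constr
begin

interpretation F: group F by (rule grp)
interpretation Gg: group G by (rule GG)

lemma coe_S: "cont_orbit_equiv G XS bt G XS bt'"
proof -
  define a :: "int \<times> 'f \<Rightarrow> (nat \<Rightarrow> int) \<times> 'f \<Rightarrow> int \<times> 'f" where "a = (\<lambda>g x. (fst g, snd g \<otimes>\<^bsub>F\<^esub> snd x \<otimes>\<^bsub>F\<^esub> inv\<^bsub>F\<^esub> (c [^]\<^bsub>F\<^esub> fst g) \<otimes>\<^bsub>F\<^esub> inv\<^bsub>F\<^esub> (snd x)))"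
  define b :: "int \<times> 'f \<Rightarrow> (nat \<Rightarrow> int) \<times> 'f \<Rightarrow> int \<times> 'f" where "b = (\<lambda>g x. (fst g, snd g \<otimes>\<^bsub>F\<^esub> snd x \<otimes>\<^bsub>F\<^esub> c [^]\<^bsub>F\<^esub> fst g \<otimes>\<^bsub>F\<^esub> inv\<^bsub>F\<^esub> (snd x)))"
  have f1: "homeomorphic_maps XS XS id id" by (simp add: homeomorphic_maps_id)
  have f2: "\<forall>g \<in> carrier G. continuous_map XS (discrete_topology (carrier G)) (a g)"
  proof
    fix g assume g: "g \<in> carrier G"
    have "continuous_map XS (discrete_topology (carrier G))
       (\<lambda>x. (\<lambda>k. (fst g, snd g \<otimes>\<^bsub>F\<^esub> k \<otimes>\<^bsub>F\<^esub> inv\<^bsub>F\<^esub> (c [^]\<^bsub>F\<^esub> fst g) \<otimes>\<^bsub>F\<^esub> inv\<^bsub>F\<^esub> k)) (snd x))"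
      using g cF by (intro cont_snd) auto
    then show "continuous_map XS (discrete_topology (carrier G)) (a g)" by (simp add: a_def)
  qed
  have f3: "\<forall>g \<in> carrier G. continuous_map XS (discrete_topology (carrier G)) (b g)"
  proof
    fix g assume g: "g \<in> carrier G"
    have "continuous_map XS (discrete_topology (carrier G))
       (\<lambda>x. (\<lambda>k. (fst g, snd g \<otimes>\<^bsub>F\<^esub> k \<otimes>\<^bsub>F\<^esub> c [^]\<^bsub>F\<^esub> fst g \<otimes>\<^bsub>F\<^esub> inv\<^bsub>F\<^esub> k)) (snd x))"
      using g cF by (intro cont_snd) auto
    then show "continuous_map XS (discrete_topology (carrier G)) (b g)" by (simp add: b_def)
  qed
  have f4: "\<forall>g \<in> carrier G. \<forall>x \<in> topspace XS. id (bt g x) = bt' (a g x) (id x)"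
    using cF by (auto simp: topspace_XS a_def bt_def bt'_def F.m_assoc)
  have f5: "\<forall>g \<in> carrier G. \<forall>x \<in> topspace XS. id (bt' g x) = bt (b g x) (id x)"
    using cF by (auto simp: topspace_XS b_def bt_def bt'_def F.m_assoc)
  show ?thesis
    unfolding cont_orbit_equiv_def
    apply (rule exI[where x=id])
    apply (rule exI[where x=id])
    apply (rule exI[where x=a])
    apply (rule exI[where x=b])
    using f1 f2 f3 f4 f5 by blast
qed

lemma closed_Ysp: "closedin PY Ysp"
proof -
  have eq: "Ysp = (\<Inter>k\<in>UNIV. {y \<in> topspace PY. (\<lambda>y. y k) y = ((\<lambda>v. v mod (int q) ^ k) \<circ> (\<lambda>y. y (Suc k))) y})"
    using Ysp_sub unfolding Ysp_def by auto
  have "closedin PY {y \<in> topspace PY. (\<lambda>y. y k) y = ((\<lambda>v. v mod (int q) ^ k) \<circ> (\<lambda>y. y (Suc k))) y}" for k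
  proof (rule closedin_continuous_maps_eq)
    show "Hausdorff_space (discrete_topology {0..<(int q) ^ k})" by simp
    show "continuous_map PY (discrete_topology {0..<(int q) ^ k}) (\<lambda>y. y k)" by (rule cont_coord)
    have "continuous_map (discrete_topology {0..<(int q) ^ Suc k}) (discrete_topology {0..<(int q) ^ k}) (\<lambda>v. v mod (int q) ^ k)"
      using qpos[of k] by (simp add: Pi_iff pos_mod_sign pos_mod_bound)
    then show "continuous_map PY (discrete_topology {0..<(int q) ^ k}) ((\<lambda>v. v mod (int q) ^ k) \<circ> (\<lambda>y. y (Suc k)))"
      by (rule continuous_map_compose[OF cont_coord])
  qed
  then show ?thesis unfolding eq by (intro closedin_INT) auto
qed

lemma compact_XS: "compact_space XS"
proof -
  have "compact_space PY"
    unfolding PY_def compact_space_product_topology by (simp add: compact_space_discrete_topology)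
  then have "compact_space YT"
    unfolding YT_def by (intro compact_space_subtopology closedin_compact_space closed_Ysp)
  then show ?thesis
    unfolding XS_def compact_space_prod_topology using fin by (simp add: compact_space_discrete_topology)
qed

lemma hausdorff_XS: "Hausdorff_space XS"
proof -
  have "Hausdorff_space PY"
    unfolding PY_def Hausdorff_space_product_topology by simp
  then have "Hausdorff_space YT"
    unfolding YT_def by (rule Hausdorff_space_subtopology)
  then show ?thesis
    unfolding XS_def Hausdorff_space_prod_topology by simp
qed

lemma zero_Ysp: "(\<lambda>_. 0) \<in> Ysp" by (simp add: Ysp_def)

lemma infinite_XS: "infinite (topspace XS)"
proof
  assume fin: "finite (topspace XS)"
  have "(\<lambda>n. (sh n (\<lambda>_. 0), \<one>\<^bsub>F\<^esub>)) ` (UNIV :: int set) \<subseteq> topspace XS"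
    using sh_Ysp[OF zero_Ysp] by (auto simp: topspace_XS)
  moreover have "inj (\<lambda>n. (sh n (\<lambda>_. 0), \<one>\<^bsub>F\<^esub>))"
    by (rule injI) (use sh_inj[OF zero_Ysp] in auto)
  ultimately have "finite (UNIV :: int set)"
    using fin finite_subset finite_imageD by metis
  then show False by simp
qed

end

context constr
begin

interpretation F: group F by (rule grp)
interpretation Gg: group G by (rule GG)

lemma central_snd:
  assumes g: "(a, f) \<in> carrier G" and cen: "\<forall>w \<in> carrier G. (a, f) \<otimes>\<^bsub>G\<^esub> w = w \<otimes>\<^bsub>G\<^esub> (a, f)"
  shows "f = \<one>\<^bsub>F\<^esub>"
proof -
  have f: "f \<in> carrier F" using g by simp
  have "\<forall>f' \<in> carrier F. f \<otimes>\<^bsub>F\<^esub> f' = f' \<otimes>\<^bsub>F\<^esub> f"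
  proof
    fix f' assume f': "f' \<in> carrier F"
    have "(a, f) \<otimes>\<^bsub>G\<^esub> (0, f') = (0, f') \<otimes>\<^bsub>G\<^esub> (a, f)" using cen f' by simp
    then show "f \<otimes>\<^bsub>F\<^esub> f' = f' \<otimes>\<^bsub>F\<^esub> f" by simp
  qed
  then have "f \<in> group_center F" using f by (simp add: group_center_def)
  then show ?thesis using ctr by simp
qed

lemma central_one:
  "\<forall>w \<in> carrier G. (a, \<one>\<^bsub>F\<^esub>) \<otimes>\<^bsub>G\<^esub> w = w \<otimes>\<^bsub>G\<^esub> (a, \<one>\<^bsub>F\<^esub>)"
  by (auto simp: mult_DirProd')

lemma noconj: "\<not> conjugate_actions G XS bt bt'"
proof
  assume "conjugate_actions G XS bt bt'"
  then obtain \<phi> \<tau> where hp: "homeomorphic_map XS XS \<phi>" and tau: "\<tau> \<in> iso G G"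
    and eq: "\<forall>g \<in> carrier G. \<forall>x \<in> topspace XS. \<phi> (bt g x) = bt' (\<tau> g) (\<phi> x)"
    unfolding conjugate_actions_def by blast
  have hom: "\<tau> \<in> hom G G" using tau by (simp add: iso_def)
  have bij: "bij_betw \<tau> (carrier G) (carrier G)" using tau by (simp add: iso_def)
  have tmul: "\<And>x y. x \<in> carrier G \<Longrightarrow> y \<in> carrier G \<Longrightarrow> \<tau> (x \<otimes>\<^bsub>G\<^esub> y) = \<tau> x \<otimes>\<^bsub>G\<^esub> \<tau> y"
    using hom by (rule hom_mult)
  have tc: "\<And>x. x \<in> carrier G \<Longrightarrow> \<tau> x \<in> carrier G" using bij by (rule bij_betw_apply)
  have tinj: "inj_on \<tau> (carrier G)" using bij by (rule bij_betw_imp_inj_on)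
  have tsurj: "\<tau> ` carrier G = carrier G" using bij by (rule bij_betw_imp_surj_on)
  have cen_back: "\<forall>w \<in> carrier G. x \<otimes>\<^bsub>G\<^esub> w = w \<otimes>\<^bsub>G\<^esub> x"
    if x: "x \<in> carrier G" and cx: "\<forall>w \<in> carrier G. \<tau> x \<otimes>\<^bsub>G\<^esub> w = w \<otimes>\<^bsub>G\<^esub> \<tau> x" for x
  proof
    fix w assume w: "w \<in> carrier G"
    have cc: "\<tau> x \<otimes>\<^bsub>G\<^esub> \<tau> w = \<tau> w \<otimes>\<^bsub>G\<^esub> \<tau> x" using cx tc[OF w] by blast
    have "\<tau> (x \<otimes>\<^bsub>G\<^esub> w) = \<tau> (w \<otimes>\<^bsub>G\<^esub> x)"
      using tmul[OF x w] tmul[OF w x] cc by simp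
    then show "x \<otimes>\<^bsub>G\<^esub> w = w \<otimes>\<^bsub>G\<^esub> x"
      using tinj x w by (meson Gg.m_closed inj_onD)
  qed
  have cen_fwd: "\<forall>w \<in> carrier G. \<tau> x \<otimes>\<^bsub>G\<^esub> w = w \<otimes>\<^bsub>G\<^esub> \<tau> x"
    if x: "x \<in> carrier G" and cx: "\<forall>w \<in> carrier G. x \<otimes>\<^bsub>G\<^esub> w = w \<otimes>\<^bsub>G\<^esub> x" for x
  proof
    fix w assume w: "w \<in> carrier G"
    then obtain w' where w': "w' \<in> carrier G" "w = \<tau> w'" using tsurj by blast
    have cc: "x \<otimes>\<^bsub>G\<^esub> w' = w' \<otimes>\<^bsub>G\<^esub> x" using cx w'(1) by blast
    show "\<tau> x \<otimes>\<^bsub>G\<^esub> w = w \<otimes>\<^bsub>G\<^esub> \<tau> x"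
      using tmul[OF x w'(1)] tmul[OF w'(1) x] cc w'(2) by simp
  qed
  have "(1, \<one>\<^bsub>F\<^esub>) \<in> carrier G" by simp
  then obtain g0 where g0: "g0 \<in> carrier G" and tg0: "\<tau> g0 = (1, \<one>\<^bsub>F\<^esub>)"
    using tsurj by (metis imageE)
  obtain b f0 where g0b: "g0 = (b, f0)" by (cases g0)
  have "\<forall>w \<in> carrier G. g0 \<otimes>\<^bsub>G\<^esub> w = w \<otimes>\<^bsub>G\<^esub> g0"
    using cen_back[OF g0] central_one tg0 by simp
  then have f0: "f0 = \<one>\<^bsub>F\<^esub>" using central_snd g0 g0b by blast
  define U where "U = Ysp \<times> {\<one>\<^bsub>F\<^esub>}"
  have UX: "U \<subseteq> topspace XS" by (auto simp: U_def topspace_XS)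
  have "closedin XS U"
    unfolding U_def XS_def closedin_prod_Times_iff
    using closedin_topspace[of YT] by (simp add: topspace_YT)
  then have clV: "closedin XS (\<phi> ` U)" using homeomorphic_map_closedness[OF hp UX] by simp
  have cphi: "continuous_map XS XS \<phi>" using hp homeomorphic_imp_continuous_map by blast
  have injphi: "inj_on \<phi> (topspace XS)" using hp homeomorphic_imp_injective_map by blast
  have Vinv: "bt' (1, \<one>\<^bsub>F\<^esub>) p \<in> \<phi> ` U" if p: "p \<in> \<phi> ` U" for p
  proof -
    obtain u where u: "u \<in> U" and pu: "p = \<phi> u" using p by blast
    have "bt g0 u \<in> U" using u sh_Ysp by (auto simp: U_def g0b f0 bt_def)
    moreover have "\<phi> (bt g0 u) = bt' (1, \<one>\<^bsub>F\<^esub>) p" using eq g0 u UX tg0 pu by auto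
    ultimately show ?thesis by force
  qed
  define u0 where "u0 = ((\<lambda>_::nat. 0::int), \<one>\<^bsub>F\<^esub>)"
  have u0U: "u0 \<in> U" by (simp add: u0_def U_def zero_Ysp)
  have p0X: "\<phi> u0 \<in> topspace XS" using cm_mem[OF cphi] u0U UX by blast
  obtain y k where p0: "\<phi> u0 = (y, k)" by (cases "\<phi> u0")
  have y: "y \<in> Ysp" and k: "k \<in> carrier F" using p0X p0 by (auto simp: topspace_XS)
  have bcomp: "bt' (g \<otimes>\<^bsub>G\<^esub> h) x = bt' g (bt' h x)" if "g \<in> carrier G" "h \<in> carrier G" "x \<in> topspace XS" for g h x
    using act_bt' that unfolding continuous_action_def by blast
  have bX: "bt' g x \<in> topspace XS" if "g \<in> carrier G" "x \<in> topspace XS" for g x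
    using act_bt' that unfolding continuous_action_def by (meson cm_mem)
  have iter: "bt' (int n, \<one>\<^bsub>F\<^esub>) (y, k) \<in> \<phi> ` U" for n
  proof (induction n)
    case 0
    have "bt' (int 0, \<one>\<^bsub>F\<^esub>) (y, k) = (y, k)" using y k by (simp add: bt'_def sh_0)
    then show ?case using u0U p0 by (metis image_eqI)
  next
    case (Suc n)
    have "bt' (int (Suc n), \<one>\<^bsub>F\<^esub>) (y, k) = bt' ((1, \<one>\<^bsub>F\<^esub>) \<otimes>\<^bsub>G\<^esub> (int n, \<one>\<^bsub>F\<^esub>)) (y, k)"
      by simp
    also have "\<dots> = bt' (1, \<one>\<^bsub>F\<^esub>) (bt' (int n, \<one>\<^bsub>F\<^esub>) (y, k))"
      using bcomp[of "(1, \<one>\<^bsub>F\<^esub>)" "(int n, \<one>\<^bsub>F\<^esub>)" "(y, k)"] y k by (simp add: topspace_XS)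
    finally show ?case using Vinv[OF Suc.IH] by simp
  qed
  have iterK: "bt' (int (q ^ K), \<one>\<^bsub>F\<^esub>) (y, k) = (sh ((int q) ^ K) y, k \<otimes>\<^bsub>F\<^esub> c)" for K
  proof -
    have "c [^]\<^bsub>F\<^esub> (int (q ^ K)) = c" by (simp only: int_pow_int cq)
    then show ?thesis using k cF by (simp add: bt'_def of_nat_power)
  qed
  have kc: "k \<otimes>\<^bsub>F\<^esub> c \<in> carrier F" using k cF by simp
  have ykc: "(y, k \<otimes>\<^bsub>F\<^esub> c) \<in> \<phi> ` U"
  proof (rule ccontr)
    assume nin: "(y, k \<otimes>\<^bsub>F\<^esub> c) \<notin> \<phi> ` U"
    have "openin XS (topspace XS - \<phi> ` U)" using clV by (simp add: closedin_def)
    moreover have "(y, k \<otimes>\<^bsub>F\<^esub> c) \<in> topspace XS - \<phi> ` U" using nin y kc by (simp add: topspace_XS)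
    ultimately obtain K where K: "\<forall>y'\<in>Ysp. (\<forall>i\<le>K. y' i = y i) \<longrightarrow> (y', k \<otimes>\<^bsub>F\<^esub> c) \<in> topspace XS - \<phi> ` U"
      using nbhd by blast
    have "(sh ((int q) ^ K) y, k \<otimes>\<^bsub>F\<^esub> c) \<in> topspace XS - \<phi> ` U"
      using K sh_Ysp[OF y] sh_agree[OF y] by blast
    moreover have "(sh ((int q) ^ K) y, k \<otimes>\<^bsub>F\<^esub> c) \<in> \<phi> ` U" using iter[of "q ^ K"] iterK[of K] by simp
    ultimately show False by blast
  qed
  define h where "h = k \<otimes>\<^bsub>F\<^esub> c \<otimes>\<^bsub>F\<^esub> inv\<^bsub>F\<^esub> k"
  have hF: "h \<in> carrier F" using k cF by (simp add: h_def)
  have hk: "h \<otimes>\<^bsub>F\<^esub> k = k \<otimes>\<^bsub>F\<^esub> c" using k cF by (simp add: h_def F.m_assoc)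
  have h1: "h \<noteq> \<one>\<^bsub>F\<^esub>"
  proof
    assume "h = \<one>\<^bsub>F\<^esub>"
    then have "k \<otimes>\<^bsub>F\<^esub> c = k" using hk k by simp
    then show False using c1 k cF by simp
  qed
  have "(0, h) \<in> carrier G" using hF by simp
  then obtain g1 where g1: "g1 \<in> carrier G" and tg1: "\<tau> g1 = (0, h)"
    using tsurj by (metis imageE)
  obtain a f where g1a: "g1 = (a, f)" by (cases g1)
  have f1: "f \<noteq> \<one>\<^bsub>F\<^esub>"
  proof
    assume "f = \<one>\<^bsub>F\<^esub>"
    then have "\<forall>w \<in> carrier G. g1 \<otimes>\<^bsub>G\<^esub> w = w \<otimes>\<^bsub>G\<^esub> g1" using central_one g1a by simp
    then have "\<forall>w \<in> carrier G. (0, h) \<otimes>\<^bsub>G\<^esub> w = w \<otimes>\<^bsub>G\<^esub> (0, h)" using cen_fwd[OF g1] tg1 by simp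
    then have "h = \<one>\<^bsub>F\<^esub>" using central_snd hF by simp
    then show False using h1 by simp
  qed
  have "\<phi> (bt g1 u0) = bt' (0, h) (y, k)" using eq g1 u0U UX tg1 p0 by auto
  also have "\<dots> = (y, k \<otimes>\<^bsub>F\<^esub> c)" using y hk kc by (simp add: bt'_def sh_0)
  finally have e1: "\<phi> (bt g1 u0) = (y, k \<otimes>\<^bsub>F\<^esub> c)" .
  obtain u1 where u1: "u1 \<in> U" and pu1: "(y, k \<otimes>\<^bsub>F\<^esub> c) = \<phi> u1" using ykc by blast
  have "bt g1 u0 \<in> topspace XS"
    using act_bt g1 u0U UX unfolding continuous_action_def by (meson cm_mem subsetD)
  moreover have "u1 \<in> topspace XS" using u1 UX by blast
  moreover have "\<phi> (bt g1 u0) = \<phi> u1" using e1 pu1 by simp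
  ultimately have "bt g1 u0 = u1" using injphi by (simp add: inj_on_def)
  moreover have "snd (bt g1 u0) = f" using g1 g1a by (simp add: bt_def u0_def)
  ultimately have "f \<in> {\<one>\<^bsub>F\<^esub>}" using u1 by (auto simp: U_def)
  then show False using f1 by simp
qed

end

theorem theorem1p1:
  fixes F :: "('f, 'm) monoid_scheme"
  assumes "group F"
    and "finite (carrier F)"
    and "carrier F \<noteq> {\<one>\<^bsub>F\<^esub>}"
    and "group_center F = {\<one>\<^bsub>F\<^esub>}"
  shows "\<exists>(T :: (nat \<Rightarrow> bool) topology) \<alpha> \<alpha>'.
           infinite (topspace T) \<and> compact_space T \<and> Hausdorff_space T \<and>
           continuous_action (integer_group \<times>\<times> F) T \<alpha> \<and>
           continuous_action (integer_group \<times>\<times> F) T \<alpha>' \<and>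
           free_action (integer_group \<times>\<times> F) T \<alpha> \<and>
           free_action (integer_group \<times>\<times> F) T \<alpha>' \<and>
           minimal_action (integer_group \<times>\<times> F) T \<alpha> \<and>
           minimal_action (integer_group \<times>\<times> F) T \<alpha>' \<and>
           cont_orbit_equiv (integer_group \<times>\<times> F) T \<alpha> (integer_group \<times>\<times> F) T \<alpha>' \<and>
           \<not> conjugate_actions (integer_group \<times>\<times> F) T \<alpha> \<alpha>'"
proof -
  interpret F: group F by (rule assms(1))
  obtain c where cF: "c \<in> carrier F" and c1: "c \<noteq> \<one>\<^bsub>F\<^esub>"
    using assms(3) F.one_closed by blast
  define N where "N = card (carrier F)"
  have N1: "1 \<le> N" using assms(2) cF by (auto simp: N_def card_gt_0_iff Suc_le_eq)
  define q where "q = N + 1"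
  have q2: "2 \<le> q" using N1 by (simp add: q_def)
  have pw: "\<exists>t. (N + 1) ^ K = N * t + 1" for K
  proof (induction K)
    case 0
    then show ?case by (intro exI[of _ 0]) simp
  next
    case (Suc K)
    then obtain t where t: "(N + 1) ^ K = N * t + 1" by blast
    have "(N + 1) ^ Suc K = (N + 1) * (N * t + 1)" by (simp only: power_Suc t)
    also have "\<dots> = N * (t * (N + 1) + 1) + 1" by (simp add: algebra_simps)
    finally have "(N + 1) ^ Suc K = N * (t * (N + 1) + 1) + 1" .
    then show ?case by blast
  qed
  have cN: "c [^]\<^bsub>F\<^esub> N = \<one>\<^bsub>F\<^esub>"
    using F.pow_order_eq_1[OF cF] by (simp add: N_def order_def)
  have cq: "c [^]\<^bsub>F\<^esub> (q ^ K) = c" for K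
  proof -
    obtain t where t: "q ^ K = N * t + 1" using pw[of K] by (auto simp: q_def)
    have "c [^]\<^bsub>F\<^esub> (N * t + 1) = c [^]\<^bsub>F\<^esub> (N * t) \<otimes>\<^bsub>F\<^esub> c [^]\<^bsub>F\<^esub> (1::nat)"
      using F.nat_pow_mult[OF cF, of "N * t" 1] by simp
    also have "c [^]\<^bsub>F\<^esub> (N * t) = (c [^]\<^bsub>F\<^esub> N) [^]\<^bsub>F\<^esub> t"
      using F.nat_pow_pow[OF cF, of N t] by simp
    finally show ?thesis using cN cF by (simp add: t)
  qed
  interpret C: constr F c q
    by unfold_locales (use assms cF c1 q2 cq in auto)
  obtain e :: "(nat \<Rightarrow> int) \<times> 'f \<Rightarrow> (nat \<Rightarrow> bool)" where e: "inj_on e (UNIV \<times> carrier F)"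
    using encode_exists[OF assms(2)] by blast
  have ei: "inj_on e (topspace C.XS)"
    using e by (rule inj_on_subset) (auto simp: C.topspace_XS)
  obtain T :: "(nat \<Rightarrow> bool) topology" and d where h: "homeomorphic_maps C.XS T e d"
    and tT: "topspace T = e ` topspace C.XS"
    using homeo_image[OF ei] by blast
  have hs: "C.XS homeomorphic_space T" using h homeomorphic_space_def by blast
  have inf: "infinite (topspace T)"
    using tT C.infinite_XS ei finite_image_iff by metis
  have cpt: "compact_space T" using homeomorphic_compact_space[OF hs] C.compact_XS by simp
  have hau: "Hausdorff_space T" using homeomorphic_Hausdorff_space[OF hs] C.hausdorff_XS by simp
  have nc: "\<not> conjugate_actions (integer_group \<times>\<times> F) T (\<lambda>g x. e (C.bt g (d x))) (\<lambda>g x. e (C.bt' g (d x)))"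
    using transport_conj[OF h C.act_bt C.act_bt'] C.noconj by blast
  show ?thesis
    apply (rule exI[where x=T])
    apply (rule exI[where x="\<lambda>g x. e (C.bt g (d x))"])
    apply (rule exI[where x="\<lambda>g x. e (C.bt' g (d x))"])
    using inf cpt hau transport_action[OF h C.act_bt] transport_action[OF h C.act_bt']
      transport_free[OF h C.act_bt C.free_bt] transport_free[OF h C.act_bt' C.free_bt']
      transport_minimal[OF h C.act_bt C.min_bt] transport_minimal[OF h C.act_bt' C.min_bt']
      transport_coe[OF h C.act_bt C.coe_S C.act_bt'] nc
    by (intro conjI)
qed

end
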